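(* Let $A$ be a ring having the property $(TF)_{right}$. Then for any monoid $M$ the monoid ring $A[M]$ also has the property $(TF)_{right}$.
   Context: A ring $A$ has the property $(TF)_{right}$ (right triple factorization property) if for every finite collection $a_1,\dots,a_m\in A$ there exist $b_1,\dots,b_m,c,d\in A$ such that $a_i=b_icd$ for $1\le i\le m$ and the left annihilators in $A$ of $c$ and of $cd$ coincide. $A[M]$ denotes the monoid ring of finite formal sums $\sum a_j m_j$ with $a_j\in A$, $m_j\in M$. *)

theory Defs
  imports "HOL-Library.Poly_Mapping"
begin

definition TF_right :: "'a::ring itself \<Rightarrow> bool" where
  "TF_right _ \<longleftrightarrow>
     (\<forall>as :: 'a list. \<exists>bs :: 'a list. \<exists>c d :: 'a.
        length bs = length as \<and>
        (\<forall>i < length as. as ! i = bs ! i * c * d) \<and>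
        {x :: 'a. x * c = 0} = {x. x * (c * d) = 0})"

end

theory Submission
  imports Defs
begin
lemma lookup_mult_single0:
  fixes p :: "'m::monoid_add \<Rightarrow>\<^sub>0 'a::semiring_0"
  shows "Poly_Mapping.lookup (p * Poly_Mapping.single 0 s) x = Poly_Mapping.lookup p x * s"
proof (transfer fixing: s x)
  fix p :: "'m \<Rightarrow> 'a"
  have "prod_fun p (\<lambda>k'. s when 0 = k') x = (\<Sum>l. p l * (s when x = l))"
  proof -
    have inner: "(\<Sum>q. ((s when 0 = q) when x = l + q)) = (s when x = l)" for l
    proof -
      have e: "\<And>q. ((s when 0 = q) when x = l + q) = ((s when x = l) when q = 0)"
        by (auto simp: when_def)
      show ?thesis by (simp only: e) simp
    qed
    show ?thesis unfolding prod_fun_def by (simp only: inner)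
  qed
  also have "\<dots> = (\<Sum>l. p l * s when x = l)"
    by (rule Sum_any.cong) (simp add: when_def)
  also have "\<dots> = p x * s" by (simp add: when_def)
  finally show "prod_fun p (\<lambda>k'. s when 0 = k') x = p x * s" .
qed

lemma lookup_map': "g 0 = 0 \<Longrightarrow> Poly_Mapping.lookup (Poly_Mapping.map g p) k = g (Poly_Mapping.lookup p k)"
  by transfer (auto simp: when_def)

lemma TF_set:
  assumes "TF_right TYPE('a::ring)" "finite (S::'a set)"
  shows "\<exists>b c d. (\<forall>s\<in>S. s = b s * c * d) \<and> {x :: 'a. x * c = 0} = {x. x * (c * d) = 0}"
proof -
  obtain as where as: "set as = S" using finite_list assms(2) by blast
  from assms(1)[unfolded TF_right_def, rule_format, of as] obtain bs c d where
    h: "length bs = length as" "\<forall>i < length as. as ! i = bs ! i * c * d"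
       "{x :: 'a. x * c = 0} = {x. x * (c * d) = 0}" by blast
  define b where "b s = bs ! (SOME i. i < length as \<and> as ! i = s)" for s
  have "\<forall>s\<in>S. s = b s * c * d"
  proof
    fix s assume "s \<in> S"
    then have "\<exists>i. i < length as \<and> as ! i = s" using as by (auto simp: in_set_conv_nth)
    then have "(SOME i. i < length as \<and> as ! i = s) < length as \<and> as ! (SOME i. i < length as \<and> as ! i = s) = s"
      by (rule someI_ex)
    then show "s = b s * c * d" using h(2) b_def by metis
  qed
  with h(3) show ?thesis by blast
qed

theorem proposition3p5:
  assumes "TF_right TYPE('a::ring)"
  shows "TF_right TYPE('m::monoid_add \<Rightarrow>\<^sub>0 'a)"
  unfolding TF_right_def
proof
  fix as :: "('m \<Rightarrow>\<^sub>0 'a) list"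
  define S where "S = (\<Union>f\<in>set as. Poly_Mapping.lookup f ` Poly_Mapping.keys f)"
  have "finite S" unfolding S_def by auto
  from TF_set[OF assms this] obtain b c d where
    hb: "\<forall>s\<in>S. s = b s * c * d" and ann: "{x :: 'a. x * c = 0} = {x. x * (c * d) = 0}" by blast
  define b' where "b' x = (if x = 0 then 0 else b x)" for x
  define B where "B f = Poly_Mapping.map b' f" for f :: "'m \<Rightarrow>\<^sub>0 'a"
  define C where "C = (Poly_Mapping.single 0 c :: 'm \<Rightarrow>\<^sub>0 'a)"
  define D where "D = (Poly_Mapping.single 0 d :: 'm \<Rightarrow>\<^sub>0 'a)"
  have CD: "C * D = Poly_Mapping.single 0 (c * d)" by (simp add: C_def D_def mult_single)
  have eq: "f = B f * C * D" if "f \<in> set as" for f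
  proof (rule poly_mapping_eqI)
    fix k
    have "Poly_Mapping.lookup (B f * C * D) k = b' (Poly_Mapping.lookup f k) * c * d"
      by (simp add: C_def D_def lookup_mult_single0 B_def lookup_map' b'_def)
    also have "\<dots> = Poly_Mapping.lookup f k"
    proof (cases "Poly_Mapping.lookup f k = 0")
      case False
      then have "k \<in> Poly_Mapping.keys f" by (simp add: in_keys_iff)
      then have "Poly_Mapping.lookup f k \<in> S" using that unfolding S_def by blast
      then show ?thesis using hb False by (simp add: b'_def)
    qed (simp add: b'_def)
    finally show "Poly_Mapping.lookup f k = Poly_Mapping.lookup (B f * C * D) k" by simp
  qed
  have "{x. x * C = 0} = {x. x * (C * D) = 0}"
  proof -
    have "x * C = 0 \<longleftrightarrow> x * (C * D) = 0" for x
    proof -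
      have "x * C = 0 \<longleftrightarrow> (\<forall>k. Poly_Mapping.lookup x k * c = 0)"
        by (auto simp: C_def lookup_mult_single0 poly_mapping_eq_iff fun_eq_iff)
      also have "\<dots> \<longleftrightarrow> (\<forall>k. Poly_Mapping.lookup x k * (c * d) = 0)" using ann by blast
      also have "\<dots> \<longleftrightarrow> x * (C * D) = 0"
        by (auto simp: CD lookup_mult_single0 poly_mapping_eq_iff fun_eq_iff)
      finally show ?thesis .
    qed
    then show ?thesis by blast
  qed
  then show "\<exists>bs c d. length bs = length as \<and> (\<forall>i<length as. as ! i = bs ! i * c * d) \<and>
        {x. x * c = 0} = {x. x * (c * d) = 0}"
    using eq by (intro exI[of _ "map B as"] exI[of _ C] exI[of _ D]) auto
qed
end
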